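(* Let $u_1,\dots,u_m\in\mathbf{B}^d\subset\mathbb{R}^d$ and positive weights $c_1,\dots,c_m$ form a John decomposition of the identity for functions. Then $\sum_{i=1}^m c_i=d+1$ and the convex hull of $u_1,\dots,u_m$ contains the ball $\frac{1}{d+1}\mathbf{B}^d$.
   Context: $\mathbf{B}^d$ is the closed Euclidean unit ball in $\mathbb{R}^d$. The height function is $\hbar(x)=\sqrt{1-|x|^2}$ for $x\in\mathbf{B}^d$ and $0$ otherwise. Points $u_1,\dots,u_m\in\mathbf{B}^d$ and positive weights $c_1,\dots,c_m$ form a John decomposition of the identity for functions if (1) $\sum_i c_i\, u_i\otimes u_i=\mathrm{Id}_d$ (where $u\otimes u$ is the map $x\mapsto\langle u,x\rangle u$), (2) $\sum_i c_i\,\hbar(u_i)^2=1$, and (3) $\sum_i c_i u_i=0$. *)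

theory Defs
  imports "HOL-Analysis.Analysis"
begin

definition height :: "'a::euclidean_space \<Rightarrow> real" where
  "height x = (if x \<in> cball 0 1 then sqrt (1 - (norm x)^2) else 0)"

text \<open>u tensor u as the linear map x |-> <u,x> u.\<close>
definition outer :: "'a::euclidean_space \<Rightarrow> 'a \<Rightarrow> 'a" where
  "outer u = (\<lambda>x. (u \<bullet> x) *\<^sub>R u)"

definition john_decomposition_fun ::
  "nat \<Rightarrow> (nat \<Rightarrow> 'a::euclidean_space) \<Rightarrow> (nat \<Rightarrow> real) \<Rightarrow> bool" where
  "john_decomposition_fun m u c \<longleftrightarrow>
     (\<forall>i<m. u i \<in> cball 0 1 \<and> c i > 0) \<and>
     (\<forall>x. (\<Sum>i<m. c i *\<^sub>R outer (u i) x) = x) \<and>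
     (\<Sum>i<m. c i * (height (u i))^2) = 1 \<and>
     (\<Sum>i<m. c i *\<^sub>R u i) = 0"

end

theory Submission
  imports Defs
begin

theorem corollary4p3:
  fixes u :: "nat \<Rightarrow> 'a::euclidean_space" and c :: "nat \<Rightarrow> real" and m :: nat
  assumes "john_decomposition_fun m u c"
  shows "(\<Sum>i<m. c i) = real DIM('a) + 1 \<and>
         cball 0 (1 / (real DIM('a) + 1)) \<subseteq> convex hull (u ` {..<m})"
proof -
  have uc: "\<And>i. i < m \<Longrightarrow> u i \<in> cball 0 1 \<and> c i > 0"
    and id: "\<And>x. (\<Sum>i<m. c i *\<^sub>R outer (u i) x) = x"
    and h: "(\<Sum>i<m. c i * (height (u i))^2) = 1"
    and z: "(\<Sum>i<m. c i *\<^sub>R u i) = 0"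
    using assms unfolding john_decomposition_fun_def by auto
  have quad: "(\<Sum>i<m. c i * (u i \<bullet> v)^2) = v \<bullet> v" for v
  proof -
    have "v \<bullet> v = v \<bullet> (\<Sum>i<m. c i *\<^sub>R outer (u i) v)" using id by simp
    also have "\<dots> = (\<Sum>i<m. c i * (u i \<bullet> v)^2)"
      by (simp add: inner_sum_right outer_def power2_eq_square inner_commute mult.assoc)
    finally show ?thesis by simp
  qed
  have lin: "(\<Sum>i<m. c i * (u i \<bullet> w)) = 0" for w
  proof -
    have "(\<Sum>i<m. c i * (u i \<bullet> w)) = (\<Sum>i<m. c i *\<^sub>R u i) \<bullet> w"
      by (simp add: inner_sum_left)
    then show ?thesis using z by simp
  qed
  have tr: "(\<Sum>i<m. c i * (norm (u i))^2) = real DIM('a)"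
  proof -
    have "(\<Sum>i<m. c i * (norm (u i))^2) = (\<Sum>i<m. c i * (\<Sum>b\<in>Basis. (u i \<bullet> b)^2))"
    proof (rule sum.cong)
      fix i
      have "(norm (u i))^2 = u i \<bullet> u i" by (simp add: power2_norm_eq_inner)
      also have "\<dots> = (\<Sum>b\<in>Basis. (u i \<bullet> b)^2)"
        by (subst euclidean_inner) (simp add: power2_eq_square)
      finally show "c i * (norm (u i))^2 = c i * (\<Sum>b\<in>Basis. (u i \<bullet> b)^2)" by simp
    qed simp
    also have "\<dots> = (\<Sum>b\<in>(Basis::'a set). \<Sum>i<m. c i * (u i \<bullet> b)^2)"
      by (simp add: sum_distrib_left sum.swap[of _ "{..<m}"])
    also have "\<dots> = (\<Sum>b\<in>(Basis::'a set). b \<bullet> b)" using quad by simp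
    also have "\<dots> = real DIM('a)" by simp
    finally show ?thesis .
  qed
  have hh: "(\<Sum>i<m. c i * (height (u i))^2) = (\<Sum>i<m. c i * (1 - (norm (u i))^2))"
  proof (rule sum.cong)
    fix i assume "i \<in> {..<m}"
    then have "u i \<in> cball 0 1" using uc by auto
    then have "norm (u i) \<le> 1" by simp
    then have "(norm (u i))^2 \<le> 1" by (simp add: power_le_one)
    then show "c i * (height (u i))^2 = c i * (1 - (norm (u i))^2)"
      using \<open>u i \<in> cball 0 1\<close> by (simp add: height_def)
  qed simp
  have S: "(\<Sum>i<m. c i) = real DIM('a) + 1"
  proof -
    have "1 = (\<Sum>i<m. c i * (1 - (norm (u i))^2))" using h hh by simp
    also have "\<dots> = (\<Sum>i<m. c i) - (\<Sum>i<m. c i * (norm (u i))^2)"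
      by (simp add: right_diff_distrib sum_subtractf)
    finally show ?thesis using tr by simp
  qed
  have ball: "cball 0 (1 / (real DIM('a) + 1)) \<subseteq> convex hull (u ` {..<m})"
  proof
    fix x :: 'a assume x: "x \<in> cball 0 (1 / (real DIM('a) + 1))"
    show "x \<in> convex hull (u ` {..<m})"
    proof (rule ccontr)
      assume nx: "x \<notin> convex hull (u ` {..<m})"
      have cl: "closed (convex hull (u ` {..<m}))"
        by (simp add: compact_imp_closed finite_imp_compact_convex_hull)
      obtain a b where ab: "inner a x < b" "\<forall>y\<in>convex hull (u ` {..<m}). inner a y > b"
        using separating_hyperplane_closed_point[OF convex_convex_hull cl nx] by blast
      define w where "w = - a"
      define hv where "hv = - b"
      have ti: "u i \<bullet> w < hv" if "i < m" for i
      proof -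
        have "u i \<in> convex hull (u ` {..<m})" using that by (simp add: hull_inc)
        then show ?thesis using ab(2) by (auto simp: w_def hv_def inner_commute)
      qed
      have hx: "hv < w \<bullet> x" using ab(1) by (simp add: w_def hv_def)
      have nw: "norm x \<le> 1 / (real DIM('a) + 1)" using x by simp
      have wx: "w \<bullet> x \<le> norm w / (real DIM('a) + 1)"
      proof -
        have "w \<bullet> x \<le> norm w * norm x" by (rule order_trans[OF _ norm_cauchy_schwarz]) simp
        also have "\<dots> \<le> norm w * (1 / (real DIM('a) + 1))"
          by (rule mult_left_mono[OF nw]) simp
        finally show ?thesis by simp
      qed
      have each: "c i * (u i \<bullet> w)^2 \<le> c i * (hv * norm w) + (hv - norm w) * (c i * (u i \<bullet> w))"
        if "i < m" for i
      proof -
        have ci: "c i > 0" using uc that by auto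
        have nu: "norm (u i) \<le> 1" using uc that by auto
        have "- (u i \<bullet> w) \<le> norm (u i) * norm w"
          using norm_cauchy_schwarz[of "- u i" w] by simp
        also have "\<dots> \<le> norm w" using mult_right_mono[OF nu, of "norm w"] by simp
        finally have t1: "0 \<le> norm w + u i \<bullet> w" by simp
        have t2: "0 \<le> hv - u i \<bullet> w" using ti[OF that] by simp
        have "0 \<le> (hv - u i \<bullet> w) * (norm w + u i \<bullet> w)" using t1 t2 by simp
        then have "(u i \<bullet> w)^2 \<le> hv * norm w + (hv - norm w) * (u i \<bullet> w)"
          by (simp add: algebra_simps power2_eq_square)
        then have "c i * (u i \<bullet> w)^2 \<le> c i * (hv * norm w + (hv - norm w) * (u i \<bullet> w))"
          using ci by simp
        then show ?thesis by (simp add: algebra_simps)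
      qed
      have "w \<bullet> w \<le> (\<Sum>i<m. c i * (hv * norm w) + (hv - norm w) * (c i * (u i \<bullet> w)))"
        using quad[of w] each by (metis (no_types, lifting) lessThan_iff sum_mono)
      also have "\<dots> = (\<Sum>i<m. c i) * (hv * norm w) + (hv - norm w) * (\<Sum>i<m. c i * (u i \<bullet> w))"
        by (simp add: sum.distrib sum_distrib_left sum_distrib_right)
      also have "\<dots> = (real DIM('a) + 1) * (hv * norm w)" using S lin by simp
      finally have A: "norm w * norm w \<le> (real DIM('a) + 1) * hv * norm w"
        by (simp add: power2_norm_eq_inner[symmetric] power2_eq_square mult.assoc)
      have "a \<noteq> 0"
      proof
        assume "a = 0"
        then have "0 < b" using ab(1) by simp
        moreover have "u 0 \<in> convex hull (u ` {..<m})" if "0 < m" using that by (simp add: hull_inc)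
        ultimately show False using ab(2) \<open>a = 0\<close> S by (cases "m = 0") auto
      qed
      then have wp: "norm w > 0" by (simp add: w_def)
      then have "norm w \<le> (real DIM('a) + 1) * hv" using A by simp
      moreover have "(real DIM('a) + 1) * hv < norm w"
      proof -
        have "hv < norm w / (real DIM('a) + 1)" using hx wx by simp
        then show ?thesis by (simp add: field_simps)
      qed
      ultimately show False by simp
    qed
  qed
  show ?thesis using S ball by simp
qed

end
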